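(* The variety $\mathsf{V}(S_{(4,475)})$ is the ai-semiring variety defined by the identity $xy\approx x^2$.
   Context: An ai-semiring is an algebra $(S,+,\cdot)$ with $(S,+)$ a semilattice, $(S,\cdot)$ a semigroup, and both distributive laws. $\mathsf{V}(S)$ is the variety generated by $S$; "the ai-semiring variety defined by identities $\Sigma$" is the class of all ai-semirings satisfying $\Sigma$. $S_{(4,475)}$ has carrier $\{1,2,3,4\}$; addition: $x+x=x$, $2+x=x$, $1+x=1$ for all $x$, $3+4=1$; multiplication (row $a$, column $b$ gives $a\cdot b$): row $1$: $3,3,3,3$; row $2$: $2,2,2,2$; row $3$: $3,3,3,3$; row $4$: $3,3,3,3$. *)

theory Defs
  imports Main
begin

datatype trm = Var nat | Add trm trm | Mul trm trm

fun eval :: "('a \<Rightarrow> 'a \<Rightarrow> 'a) \<Rightarrow> ('a \<Rightarrow> 'a \<Rightarrow> 'a) \<Rightarrow> (nat \<Rightarrow> 'a) \<Rightarrow> trm \<Rightarrow> 'a" where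
  "eval ad mu \<rho> (Var n) = \<rho> n"
| "eval ad mu \<rho> (Add s t) = ad (eval ad mu \<rho> s) (eval ad mu \<rho> t)"
| "eval ad mu \<rho> (Mul s t) = mu (eval ad mu \<rho> s) (eval ad mu \<rho> t)"

definition algebra :: "'a set \<Rightarrow> ('a \<Rightarrow> 'a \<Rightarrow> 'a) \<Rightarrow> ('a \<Rightarrow> 'a \<Rightarrow> 'a) \<Rightarrow> bool" where
  "algebra C ad mu \<longleftrightarrow> (\<forall>x\<in>C. \<forall>y\<in>C. ad x y \<in> C \<and> mu x y \<in> C)"

definition satisfies :: "'a set \<Rightarrow> ('a \<Rightarrow> 'a \<Rightarrow> 'a) \<Rightarrow> ('a \<Rightarrow> 'a \<Rightarrow> 'a) \<Rightarrow> trm \<Rightarrow> trm \<Rightarrow> bool" where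
  "satisfies C ad mu p q \<longleftrightarrow>
     (\<forall>\<rho>. (\<forall>n. \<rho> n \<in> C) \<longrightarrow> eval ad mu \<rho> p = eval ad mu \<rho> q)"

definition ai_semiring :: "'a set \<Rightarrow> ('a \<Rightarrow> 'a \<Rightarrow> 'a) \<Rightarrow> ('a \<Rightarrow> 'a \<Rightarrow> 'a) \<Rightarrow> bool" where
  "ai_semiring C ad mu \<longleftrightarrow> algebra C ad mu \<and>
     (\<forall>x\<in>C. \<forall>y\<in>C. \<forall>z\<in>C.
        ad (ad x y) z = ad x (ad y z) \<and> ad x y = ad y x \<and> ad x x = x \<and>
        mu (mu x y) z = mu x (mu y z) \<and>
        mu x (ad y z) = ad (mu x y) (mu x z) \<and>
        mu (ad x y) z = ad (mu x z) (mu y z))"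

definition S_carrier :: "nat set" where "S_carrier = {1,2,3,4}"

definition S_add :: "nat \<Rightarrow> nat \<Rightarrow> nat" where
  "S_add a b = (if a = b then a else if a = 2 then b else if b = 2 then a else 1)"

definition S_mul :: "nat \<Rightarrow> nat \<Rightarrow> nat" where
  "S_mul a b = (if a = 2 then 2 else 3)"

text \<open>Variety generated by S: the smallest equational class containing S,
  i.e. all algebras (of the signature) satisfying every identity of S (Birkhoff).\<close>
definition in_V_S :: "'a set \<Rightarrow> ('a \<Rightarrow> 'a \<Rightarrow> 'a) \<Rightarrow> ('a \<Rightarrow> 'a \<Rightarrow> 'a) \<Rightarrow> bool" where
  "in_V_S C ad mu \<longleftrightarrow> algebra C ad mu \<and>
     (\<forall>p q. satisfies S_carrier S_add S_mul p q \<longrightarrow> satisfies C ad mu p q)"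

end

theory Submission
  imports Defs
begin

fun vA :: "trm \<Rightarrow> nat set" where
  "vA (Var n) = {n}"
| "vA (Add s t) = vA s \<union> vA t"
| "vA (Mul s t) = {}"

fun vB :: "trm \<Rightarrow> nat set" where
  "vB (Var n) = {}"
| "vB (Add s t) = vB s \<union> vB t"
| "vB (Mul s t) = vA s \<union> vB s"

lemma eval_in:
  assumes "algebra C ad mu" "\<forall>n. \<rho> n \<in> C"
  shows "eval ad mu \<rho> t \<in> C"
  using assms by (induction t) (auto simp: algebra_def)

lemma le_add:
  assumes "ai_semiring C ad mu" "x \<in> C" "y \<in> C" "c \<in> C"
  shows "ad (ad x y) c = c \<longleftrightarrow> ad x c = c \<and> ad y c = c"
proof -
  have A: "\<And>x y z. x \<in> C \<Longrightarrow> y \<in> C \<Longrightarrow> z \<in> C \<Longrightarrow> ad (ad x y) z = ad x (ad y z) \<and> ad x y = ad y x \<and> ad x x = x"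
    using assms(1) unfolding ai_semiring_def by blast
  have cl: "\<And>x y. x \<in> C \<Longrightarrow> y \<in> C \<Longrightarrow> ad x y \<in> C"
    using assms(1) unfolding ai_semiring_def algebra_def by blast
  show ?thesis
  proof
    assume h: "ad (ad x y) c = c"
    have 1: "ad x c = c"
    proof -
      have "ad x c = ad x (ad (ad x y) c)" using h by simp
      also have "\<dots> = ad (ad x (ad x y)) c" using A assms cl by metis
      also have "ad x (ad x y) = ad x y" using A assms cl by metis
      finally show ?thesis using h by simp
    qed
    have 2: "ad y c = c"
    proof -
      have h': "ad (ad y x) c = c" using h A assms by metis
      have "ad y c = ad y (ad (ad y x) c)" using h' by simp
      also have "\<dots> = ad (ad y (ad y x)) c" using A assms cl by metis
      also have "ad y (ad y x) = ad y x" using A assms cl by metis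
      finally show ?thesis using h' by simp
    qed
    show "ad x c = c \<and> ad y c = c" using 1 2 by simp
  next
    assume "ad x c = c \<and> ad y c = c"
    then show "ad (ad x y) c = c" using A assms by metis
  qed
qed

lemma sq_char:
  assumes ai: "ai_semiring C ad mu" and id: "\<And>x y. x \<in> C \<Longrightarrow> y \<in> C \<Longrightarrow> mu x y = mu x x"
    and r: "\<forall>n. \<rho> n \<in> C" and c: "c \<in> C"
  shows "ad (mu (eval ad mu \<rho> t) (eval ad mu \<rho> t)) c = c \<longleftrightarrow>
         (\<forall>a\<in>vA t \<union> vB t. ad (mu (\<rho> a) (\<rho> a)) c = c)"
proof -
  have alg: "algebra C ad mu" using ai unfolding ai_semiring_def by blast
  have A: "\<And>x y z. x \<in> C \<Longrightarrow> y \<in> C \<Longrightarrow> z \<in> C \<Longrightarrow>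
        mu (mu x y) z = mu x (mu y z) \<and>
        mu x (ad y z) = ad (mu x y) (mu x z) \<and>
        mu (ad x y) z = ad (mu x z) (mu y z)"
    using ai unfolding ai_semiring_def by blast
  have cl: "\<And>x y. x \<in> C \<Longrightarrow> y \<in> C \<Longrightarrow> ad x y \<in> C \<and> mu x y \<in> C"
    using alg unfolding algebra_def by blast
  have sqsum: "mu (ad x y) (ad x y) = ad (mu x x) (mu y y)" if "x \<in> C" "y \<in> C" for x y
  proof -
    have "mu (ad x y) (ad x y) = ad (mu x (ad x y)) (mu y (ad x y))" using A that cl by blast
    also have "mu x (ad x y) = mu x x" using id that cl by blast
    also have "mu y (ad x y) = mu y y" using id that cl by blast
    finally show ?thesis .
  qed
  have sqsq: "mu (mu x y) (mu x y) = mu x x" if "x \<in> C" "y \<in> C" for x y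
  proof -
    have "mu (mu x y) (mu x y) = mu x (mu y (mu x y))" using A that cl by blast
    also have "\<dots> = mu x x" using id that cl by blast
    finally show ?thesis .
  qed
  show ?thesis
  proof (induction t)
    case (Var n) then show ?case by simp
  next
    case (Add s t)
    have es: "eval ad mu \<rho> s \<in> C" and et: "eval ad mu \<rho> t \<in> C" using eval_in[OF alg r] by auto
    then show ?case using Add sqsum[OF es et] le_add[OF ai _ _ c] cl by auto
  next
    case (Mul s t)
    have es: "eval ad mu \<rho> s \<in> C" and et: "eval ad mu \<rho> t \<in> C" using eval_in[OF alg r] by auto
    then show ?case using Mul sqsq[OF es et] by auto
  qed
qed

lemma char:
  assumes ai: "ai_semiring C ad mu" and id: "\<And>x y. x \<in> C \<Longrightarrow> y \<in> C \<Longrightarrow> mu x y = mu x x"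
    and r: "\<forall>n. \<rho> n \<in> C" and c: "c \<in> C"
  shows "ad (eval ad mu \<rho> t) c = c \<longleftrightarrow>
         (\<forall>a\<in>vA t. ad (\<rho> a) c = c) \<and> (\<forall>b\<in>vB t. ad (mu (\<rho> b) (\<rho> b)) c = c)"
proof -
  have alg: "algebra C ad mu" using ai unfolding ai_semiring_def by blast
  have cl: "\<And>x y. x \<in> C \<Longrightarrow> y \<in> C \<Longrightarrow> ad x y \<in> C \<and> mu x y \<in> C"
    using alg unfolding algebra_def by blast
  show ?thesis
  proof (induction t)
    case (Var n) then show ?case by simp
  next
    case (Add s t)
    have es: "eval ad mu \<rho> s \<in> C" and et: "eval ad mu \<rho> t \<in> C" using eval_in[OF alg r] by auto
    then show ?case using Add le_add[OF ai _ _ c] by auto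
  next
    case (Mul s t)
    have es: "eval ad mu \<rho> s \<in> C" and et: "eval ad mu \<rho> t \<in> C" using eval_in[OF alg r] by auto
    have "mu (eval ad mu \<rho> s) (eval ad mu \<rho> t) = mu (eval ad mu \<rho> s) (eval ad mu \<rho> s)"
      using id es et by blast
    then show ?case using sq_char[OF ai id r c, of s] by auto
  qed
qed

lemma eq_nf:
  assumes ai: "ai_semiring C ad mu" and id: "\<And>x y. x \<in> C \<Longrightarrow> y \<in> C \<Longrightarrow> mu x y = mu x x"
    and r: "\<forall>n. \<rho> n \<in> C" and h: "vA p = vA q" "vB p = vB q"
  shows "eval ad mu \<rho> p = eval ad mu \<rho> q"
proof -
  have alg: "algebra C ad mu" using ai unfolding ai_semiring_def by blast
  have ax: "\<And>x y. x \<in> C \<Longrightarrow> y \<in> C \<Longrightarrow> ad x y = ad y x \<and> ad x x = x"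
    using ai unfolding ai_semiring_def by blast
  have ep: "eval ad mu \<rho> p \<in> C" and eq: "eval ad mu \<rho> q \<in> C" using eval_in[OF alg r] by auto
  have 1: "ad (eval ad mu \<rho> p) (eval ad mu \<rho> q) = eval ad mu \<rho> q"
    using char[OF ai id r eq, of p] char[OF ai id r eq, of q] h ax eq by auto
  have 2: "ad (eval ad mu \<rho> q) (eval ad mu \<rho> p) = eval ad mu \<rho> p"
    using char[OF ai id r ep, of p] char[OF ai id r ep, of q] h ax ep by auto
  show ?thesis using 1 2 ax ep eq by metis
qed

lemma S_eval:
  "eval S_add S_mul (\<lambda>n. if n = v then 4 else 2) t =
    (if v \<in> vA t \<and> v \<in> vB t then 1 else if v \<in> vA t then 4 else if v \<in> vB t then 3 else 2)"
  by (induction t) (auto simp: S_add_def S_mul_def)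

lemma S_ident:
  assumes "satisfies S_carrier S_add S_mul p q"
  shows "vA p = vA q \<and> vB p = vB q"
proof -
  have "\<And>v. eval S_add S_mul (\<lambda>n. if n = v then 4 else 2) p = eval S_add S_mul (\<lambda>n. if n = v then 4 else 2) q"
    using assms unfolding satisfies_def S_carrier_def by auto
  then have "\<And>v. (v \<in> vA p \<longleftrightarrow> v \<in> vA q) \<and> (v \<in> vB p \<longleftrightarrow> v \<in> vB q)"
  proof -
    fix v
    assume "\<And>v. eval S_add S_mul (\<lambda>n. if n = v then 4 else 2) p = eval S_add S_mul (\<lambda>n. if n = v then 4 else 2) q"
    then have e: "eval S_add S_mul (\<lambda>n. if n = v then 4 else 2) p = eval S_add S_mul (\<lambda>n. if n = v then 4 else 2) q" .
    show "(v \<in> vA p \<longleftrightarrow> v \<in> vA q) \<and> (v \<in> vB p \<longleftrightarrow> v \<in> vB q)"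
      using e unfolding S_eval by (auto split: if_splits)
  qed
  then show ?thesis by blast
qed

lemma S_ai: "ai_semiring S_carrier S_add S_mul"
  unfolding ai_semiring_def algebra_def S_carrier_def S_add_def S_mul_def by auto

lemma S_id: "satisfies S_carrier S_add S_mul (Mul (Var 0) (Var 1)) (Mul (Var 0) (Var 0))"
  unfolding satisfies_def by (simp add: S_mul_def)

theorem proposition4p5:
  fixes C :: "'a set" and ad mu :: "'a \<Rightarrow> 'a \<Rightarrow> 'a"
  assumes "algebra C ad mu"
  shows "in_V_S C ad mu \<longleftrightarrow>
           (ai_semiring C ad mu \<and>
            satisfies C ad mu (Mul (Var 0) (Var 1)) (Mul (Var 0) (Var 0)))"
proof
  assume V: "in_V_S C ad mu"
  have sat: "\<And>p q. satisfies S_carrier S_add S_mul p q \<Longrightarrow> satisfies C ad mu p q"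
    using V unfolding in_V_S_def by blast
  have ids: "\<And>p q. satisfies S_carrier S_add S_mul p q \<Longrightarrow> x \<in> C \<Longrightarrow> y \<in> C \<Longrightarrow> z \<in> C \<Longrightarrow>
     eval ad mu (\<lambda>n. if n = 0 then x else if n = 1 then y else z) p =
     eval ad mu (\<lambda>n. if n = 0 then x else if n = 1 then y else z) q" for x y z
    using sat unfolding satisfies_def by auto
  have Sax: "\<And>x y z. x \<in> S_carrier \<Longrightarrow> y \<in> S_carrier \<Longrightarrow> z \<in> S_carrier \<Longrightarrow>
        S_add (S_add x y) z = S_add x (S_add y z) \<and> S_add x y = S_add y x \<and> S_add x x = x \<and>
        S_mul (S_mul x y) z = S_mul x (S_mul y z) \<and>
        S_mul x (S_add y z) = S_add (S_mul x y) (S_mul x z) \<and>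
        S_mul (S_add x y) z = S_add (S_mul x z) (S_mul y z)"
    using S_ai unfolding ai_semiring_def by blast
  let ?x = "Var 0" and ?y = "Var 1" and ?z = "Var 2"
  have s1: "satisfies S_carrier S_add S_mul (Add (Add ?x ?y) ?z) (Add ?x (Add ?y ?z))"
    unfolding satisfies_def using Sax by auto
  have s2: "satisfies S_carrier S_add S_mul (Add ?x ?y) (Add ?y ?x)"
    unfolding satisfies_def using Sax by auto
  have s3: "satisfies S_carrier S_add S_mul (Add ?x ?x) ?x"
    unfolding satisfies_def using Sax by auto
  have s4: "satisfies S_carrier S_add S_mul (Mul (Mul ?x ?y) ?z) (Mul ?x (Mul ?y ?z))"
    unfolding satisfies_def using Sax by auto
  have s5: "satisfies S_carrier S_add S_mul (Mul ?x (Add ?y ?z)) (Add (Mul ?x ?y) (Mul ?x ?z))"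
    unfolding satisfies_def using Sax by auto
  have s6: "satisfies S_carrier S_add S_mul (Mul (Add ?x ?y) ?z) (Add (Mul ?x ?z) (Mul ?y ?z))"
    unfolding satisfies_def using Sax by auto
  have "ai_semiring C ad mu"
    unfolding ai_semiring_def
    using assms ids[OF s1] ids[OF s2] ids[OF s3] ids[OF s4] ids[OF s5] ids[OF s6] by simp
  then show "ai_semiring C ad mu \<and> satisfies C ad mu (Mul (Var 0) (Var 1)) (Mul (Var 0) (Var 0))"
    using sat[OF S_id] by simp
next
  assume h: "ai_semiring C ad mu \<and> satisfies C ad mu (Mul (Var 0) (Var 1)) (Mul (Var 0) (Var 0))"
  have id: "\<And>x y. x \<in> C \<Longrightarrow> y \<in> C \<Longrightarrow> mu x y = mu x x"
  proof -
    fix x y assume "x \<in> C" "y \<in> C"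
    then show "mu x y = mu x x"
      using h unfolding satisfies_def
      by (auto dest: spec[of _ "\<lambda>n. if n = 0 then x else y"])
  qed
  show "in_V_S C ad mu"
    unfolding in_V_S_def
    using assms h id eq_nf S_ident unfolding satisfies_def by metis
qed

end
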